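(* Let $V$ be a finite-dimensional normed mixed lattice space (i.e. its topology is given by a mixed lattice norm). If the cone $V_{sp}$ is generating ($V=V_{sp}-V_{sp}$), then $(V,\preccurlyeq)$ is a lattice.
   Context: A mixed lattice vector space $(V,\le,\preccurlyeq)$ is a real vector space $V$ with two partial orderings $\le$ (initial order) and $\preccurlyeq$ (specific order), each making $V$ a partially ordered vector space, with positive cones $V_p=\{x:0\le x\}$, $V_{sp}=\{x:0\preccurlyeq x\}$, such that: (1) for all $x,y$ the elements $x\curlyvee y=\min\{w: w\succcurlyeq x,\ w\ge y\}$ and $x\curlywedge y=\max\{w: w\preccurlyeq x,\ w\le y\}$ exist (min/max with respect to $\le$); (2) $x\preccurlyeq y$ implies $x\le y$; (3) $x\curlyvee y, x\curlywedge y\in V_{sp}$ whenever $x,y\in V_{sp}$. Notation: $x^u=0\curlyvee x$, $x^l=0\curlyvee(-x)$, $s(x)=x^u+x^l$. A norm $\rho$ on $V$ is a mixed lattice norm if $s(x)\le s(y)$ implies $\rho(x)\le\rho(y)$. *)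

theory Defs
  imports "HOL-Analysis.Analysis"
begin

definition pordered_vs :: "('a::real_vector \<Rightarrow> 'a \<Rightarrow> bool) \<Rightarrow> bool" where
  "pordered_vs R \<longleftrightarrow>
     (\<forall>x. R x x) \<and>
     (\<forall>x y. R x y \<and> R y x \<longrightarrow> x = y) \<and>
     (\<forall>x y z. R x y \<and> R y z \<longrightarrow> R x z) \<and>
     (\<forall>x y z. R x y \<longrightarrow> R (x + z) (y + z)) \<and>
     (\<forall>x y (c::real). R x y \<and> 0 \<le> c \<longrightarrow> R (c *\<^sub>R x) (c *\<^sub>R y))"

definition is_least_wrt :: "('a \<Rightarrow> 'a \<Rightarrow> bool) \<Rightarrow> 'a set \<Rightarrow> 'a \<Rightarrow> bool" where
  "is_least_wrt R S w \<longleftrightarrow> w \<in> S \<and> (\<forall>v\<in>S. R w v)"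

definition is_greatest_wrt :: "('a \<Rightarrow> 'a \<Rightarrow> bool) \<Rightarrow> 'a set \<Rightarrow> 'a \<Rightarrow> bool" where
  "is_greatest_wrt R S w \<longleftrightarrow> w \<in> S \<and> (\<forall>v\<in>S. R v w)"

definition mup :: "('a \<Rightarrow> 'a \<Rightarrow> bool) \<Rightarrow> ('a \<Rightarrow> 'a \<Rightarrow> bool) \<Rightarrow> 'a \<Rightarrow> 'a \<Rightarrow> 'a" where
  "mup le sle x y = (THE w. is_least_wrt le {w. sle x w \<and> le y w} w)"

definition mlow :: "('a \<Rightarrow> 'a \<Rightarrow> bool) \<Rightarrow> ('a \<Rightarrow> 'a \<Rightarrow> bool) \<Rightarrow> 'a \<Rightarrow> 'a \<Rightarrow> 'a" where
  "mlow le sle x y = (THE w. is_greatest_wrt le {w. sle w x \<and> le w y} w)"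

text \<open>Mixed lattice vector space (V, le, sle): le is the initial order, sle the specific order.\<close>
definition mixed_lattice_vs :: "('a::real_vector \<Rightarrow> 'a \<Rightarrow> bool) \<Rightarrow> ('a \<Rightarrow> 'a \<Rightarrow> bool) \<Rightarrow> bool" where
  "mixed_lattice_vs le sle \<longleftrightarrow>
     pordered_vs le \<and> pordered_vs sle \<and>
     (\<forall>x y. \<exists>w. is_least_wrt le {w. sle x w \<and> le y w} w) \<and>
     (\<forall>x y. \<exists>w. is_greatest_wrt le {w. sle w x \<and> le w y} w) \<and>
     (\<forall>x y. sle x y \<longrightarrow> le x y) \<and>
     (\<forall>x y. sle 0 x \<and> sle 0 y \<longrightarrow> sle 0 (mup le sle x y) \<and> sle 0 (mlow le sle x y))"

definition ml_s :: "('a::real_vector \<Rightarrow> 'a \<Rightarrow> bool) \<Rightarrow> ('a \<Rightarrow> 'a \<Rightarrow> bool) \<Rightarrow> 'a \<Rightarrow> 'a" where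
  "ml_s le sle x = mup le sle 0 x + mup le sle 0 (- x)"

definition mixed_lattice_norm ::
  "('a::real_vector \<Rightarrow> 'a \<Rightarrow> bool) \<Rightarrow> ('a \<Rightarrow> 'a \<Rightarrow> bool) \<Rightarrow> ('a \<Rightarrow> real) \<Rightarrow> bool" where
  "mixed_lattice_norm le sle \<rho> \<longleftrightarrow>
     (\<forall>x y. le (ml_s le sle x) (ml_s le sle y) \<longrightarrow> \<rho> x \<le> \<rho> y)"

definition generating_cone :: "('a::real_vector \<Rightarrow> 'a \<Rightarrow> bool) \<Rightarrow> bool" where
  "generating_cone R \<longleftrightarrow> (\<forall>x. \<exists>a b. R 0 a \<and> R 0 b \<and> x = a - b)"

definition is_lattice_order :: "('a \<Rightarrow> 'a \<Rightarrow> bool) \<Rightarrow> bool" where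
  "is_lattice_order R \<longleftrightarrow>
     (\<forall>x y. \<exists>s. is_least_wrt R {w. R x w \<and> R y w} s) \<and>
     (\<forall>x y. \<exists>i. is_greatest_wrt R {w. R w x \<and> R w y} i)"

end

theory Submission
  imports Defs
begin

lemma fd_closed_compact:
  fixes B :: "'a::real_normed_vector set"
  assumes "finite B"
  shows "closed (span B) \<and> (\<forall>S. bounded S \<and> closed S \<and> S \<subseteq> span B \<longrightarrow> compact S)"
  using assms
proof (induction rule: finite_induct)
  case empty
  show ?case
  proof (intro conjI allI impI)
    show "closed (span ({}::'a set))" by simp
    fix S :: "'a set" assume "bounded S \<and> closed S \<and> S \<subseteq> span {}"
    then have "finite S" by (metis finite.emptyI finite_insert finite_subset span_empty)
    then show "compact S" by (rule finite_imp_compact)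
  qed
next
  case (insert b B)
  show ?case
  proof (cases "b \<in> span B")
    case True
    then show ?thesis using insert.IH by (simp add: span_redundant)
  next
    case False
    have clB: "closed (span B)" and cpB: "\<And>S. bounded S \<Longrightarrow> closed S \<Longrightarrow> S \<subseteq> span B \<Longrightarrow> compact S"
      using insert.IH by auto
    define d where "d = infdist b (span B)"
    have dpos: "d > 0" unfolding d_def
      using infdist_pos_not_in_closed[OF clB _ False] span_zero by blast
    have key: "\<bar>t\<bar> * d \<le> norm (t *\<^sub>R b + y)" if y: "y \<in> span B" for t y
    proof (cases "t = 0")
      case True then show ?thesis by simp
    next
      case False
      have m: "- ((1/t) *\<^sub>R y) \<in> span B" using y by (simp add: span_neg span_scale)
      have "d \<le> dist b (- ((1/t) *\<^sub>R y))" unfolding d_def by (rule infdist_le[OF m])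
      also have "\<dots> = norm (b + (1/t) *\<^sub>R y)" by (simp add: dist_norm)
      also have "b + (1/t) *\<^sub>R y = (1/t) *\<^sub>R (t *\<^sub>R b + y)" using False
        by (simp add: algebra_simps)
      also have "norm \<dots> = norm (t *\<^sub>R b + y) / \<bar>t\<bar>" by simp
      finally show ?thesis using False by (simp add: field_simps)
    qed
    define C where "C R = (\<lambda>p. fst p *\<^sub>R b + snd p) ` ({-R/d..R/d} \<times> (span B \<inter> cball 0 (R + R/d * norm b)))" for R
    have Ccomp: "compact (C R)" for R
      unfolding C_def
      apply (rule compact_continuous_image)
       apply (intro continuous_intros)
      apply (rule compact_Times)
       apply simp
      apply (rule cpB)
        apply (simp add: bounded_Int)
       apply (simp add: clB closed_Int)
      apply simp
      done
    have Csub: "C R \<subseteq> span (insert b B)" for R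
    proof
      fix z assume "z \<in> C R"
      then obtain t y where z: "z = t *\<^sub>R b + y" and y: "y \<in> span B" unfolding C_def by auto
      have "y \<in> span (insert b B)" using y span_mono[of B "insert b B"] by blast
      moreover have "t *\<^sub>R b \<in> span (insert b B)" by (simp add: span_base span_scale)
      ultimately show "z \<in> span (insert b B)" using z span_add by blast
    qed
    have inC: "z \<in> C R" if z: "z \<in> span (insert b B)" and nz: "norm z \<le> R" for z R
    proof -
      obtain k where k: "z - k *\<^sub>R b \<in> span B" using z by (auto simp: span_insert)
      define y where "y = z - k *\<^sub>R b"
      have zy: "z = k *\<^sub>R b + y" by (simp add: y_def)
      have "\<bar>k\<bar> * d \<le> R" using key[OF k[folded y_def], of k] nz zy by simp
      then have kb: "\<bar>k\<bar> \<le> R / d" using dpos by (simp add: field_simps)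
      then have k1: "k \<in> {-R/d..R/d}" by auto
      have "norm y \<le> norm z + norm (k *\<^sub>R b)" unfolding y_def by (rule norm_triangle_ineq4)
      also have "\<dots> \<le> R + R/d * norm b" proof -
        have "\<bar>k\<bar> * norm b \<le> R / d * norm b" using kb by (metis mult_right_mono norm_ge_zero)
        then show ?thesis using nz by simp
      qed
      finally have "y \<in> span B \<inter> cball 0 (R + R/d * norm b)" using k y_def by simp
      then show ?thesis unfolding C_def using k1 zy by (auto intro!: image_eqI[of _ _ "(k, y)"])
    qed
    have cl: "closed (span (insert b B))"
    proof -
      have "closure (span (insert b B)) \<subseteq> span (insert b B)"
      proof
        fix x assume x: "x \<in> closure (span (insert b B))"
        have "x \<in> closure (C (norm x + 1))"
          unfolding closure_approachable
        proof (intro allI impI)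
          fix e :: real assume e: "e > 0"
          obtain y where y: "y \<in> span (insert b B)" "dist y x < min e 1"
            using x e unfolding closure_approachable by (metis min_less_iff_conj zero_less_one)
          have "norm y \<le> norm x + 1" using y(2) norm_triangle_ineq2[of y x]
            by (simp add: dist_norm)
          then show "\<exists>y\<in>C (norm x + 1). dist y x < e" using inC[OF y(1)] y(2) by force
        qed
        then have "x \<in> C (norm x + 1)" using Ccomp compact_imp_closed closure_closed by metis
        then show "x \<in> span (insert b B)" using Csub by blast
      qed
      then show ?thesis by (simp add: closure_subset_eq)
    qed
    show ?thesis
    proof (intro conjI allI impI)
      show "closed (span (insert b B))" by (rule cl)
      fix S assume S: "bounded S \<and> closed S \<and> S \<subseteq> span (insert b B)"
      then obtain R where R: "\<forall>x\<in>S. norm x \<le> R" by (auto simp: bounded_pos)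
      have "S \<subseteq> C R" using S R inC by blast
      then have "S = C R \<inter> S" by blast
      then show "compact S" using compact_Int_closed[OF Ccomp] S by metis
    qed
  qed
qed

lemma po_facts:
  assumes "pordered_vs R"
  shows po_refl: "R x x"
    and po_antisym: "R x y \<Longrightarrow> R y x \<Longrightarrow> x = y"
    and po_trans: "R x y \<Longrightarrow> R y z \<Longrightarrow> R x z"
    and po_add: "R x y \<Longrightarrow> R (x + c) (y + c)"
  using assms unfolding pordered_vs_def by blast+

lemma po_sub_iff:
  assumes "pordered_vs R"
  shows "R x y \<longleftrightarrow> R 0 (y - x)"
proof
  assume "R x y" then show "R 0 (y - x)" using po_add[OF assms, of x y "-x"] by simp
next
  assume "R 0 (y - x)" then show "R x y" using po_add[OF assms, of 0 "y - x" x] by simp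
qed

lemma po_neg:
  assumes "pordered_vs R" "R x y"
  shows "R (- y) (- x)"
  using assms po_sub_iff[OF assms(1)] by (metis diff_minus_eq_add minus_diff_eq uminus_add_conv_diff)

lemma po_addpos:
  assumes "pordered_vs R" "R 0 a" "R 0 b"
  shows "R 0 (a + b)"
proof -
  have "R a (a + b)" using po_add[OF assms(1) assms(3), of a] by (simp add: add.commute)
  then show ?thesis using po_trans[OF assms(1) assms(2)] by blast
qed

lemma po_add_mono:
  assumes "pordered_vs R" "R a b" "R c d"
  shows "R (a + c) (b + d)"
  using po_addpos[OF assms(1), of "b - a" "d - c"] assms po_sub_iff[OF assms(1)]
  by (simp add: algebra_simps)

lemma least_the:
  assumes "pordered_vs R" "is_least_wrt R S w"
  shows "(THE w. is_least_wrt R S w) = w"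
  using assms po_antisym[OF assms(1)] unfolding is_least_wrt_def by (intro the_equality) blast+

lemma greatest_the:
  assumes "pordered_vs R" "is_greatest_wrt R S w"
  shows "(THE w. is_greatest_wrt R S w) = w"
  using assms po_antisym[OF assms(1)] unfolding is_greatest_wrt_def by (intro the_equality) blast+

locale mls =
  fixes le sle :: "'a::real_normed_vector \<Rightarrow> 'a \<Rightarrow> bool"
  assumes ml: "mixed_lattice_vs le sle" and nm: "mixed_lattice_norm le sle norm"
begin

lemma P: "pordered_vs le" and Q: "pordered_vs sle"
  and sle_le: "sle x y \<Longrightarrow> le x y"
  and sle_cl: "sle 0 x \<Longrightarrow> sle 0 y \<Longrightarrow> sle 0 (mup le sle x y) \<and> sle 0 (mlow le sle x y)"
  using ml unfolding mixed_lattice_vs_def by blast+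

lemma mup_prop: "is_least_wrt le {w. sle x w \<and> le y w} (mup le sle x y)"
proof -
  obtain w where w: "is_least_wrt le {w. sle x w \<and> le y w} w"
    using ml unfolding mixed_lattice_vs_def by blast
  then show ?thesis unfolding mup_def using least_the[OF P w] by simp
qed

lemma mlow_prop: "is_greatest_wrt le {w. sle w x \<and> le w y} (mlow le sle x y)"
proof -
  obtain w where w: "is_greatest_wrt le {w. sle w x \<and> le w y} w"
    using ml unfolding mixed_lattice_vs_def by blast
  then show ?thesis unfolding mlow_def using greatest_the[OF P w] by simp
qed

lemma mup_sle: "sle x (mup le sle x y)" and mup_le: "le y (mup le sle x y)"
  and mup_min: "sle x w \<Longrightarrow> le y w \<Longrightarrow> le (mup le sle x y) w"
  using mup_prop[of x y] unfolding is_least_wrt_def by auto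

lemma mlow_sle: "sle (mlow le sle x y) x" and mlow_le: "le (mlow le sle x y) y"
  and mlow_max: "sle w x \<Longrightarrow> le w y \<Longrightarrow> le w (mlow le sle x y)"
  using mlow_prop[of x y] unfolding is_greatest_wrt_def by auto

lemma mup_eq: "sle x w \<Longrightarrow> le y w \<Longrightarrow> (\<And>w'. sle x w' \<Longrightarrow> le y w' \<Longrightarrow> le w w') \<Longrightarrow> mup le sle x y = w"
  using mup_min mup_sle mup_le po_antisym[OF P] by metis

lemma mlow_eq: "sle w x \<Longrightarrow> le w y \<Longrightarrow> (\<And>w'. sle w' x \<Longrightarrow> le w' y \<Longrightarrow> le w' w) \<Longrightarrow> mlow le sle x y = w"
  using mlow_max mlow_sle mlow_le po_antisym[OF P] by metis

abbreviation u where "u x \<equiv> mup le sle 0 x"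

lemma u_pos: "sle 0 v \<Longrightarrow> u v = v"
  by (rule mup_eq) (auto simp: po_refl[OF P] sle_le)

lemma u_neg: "le 0 v \<Longrightarrow> u (- v) = 0"
  apply (rule mup_eq)
    apply (simp add: po_refl[OF Q])
   apply (metis P minus_zero po_neg)
  using sle_le by blast

lemma u_mono: "le a b \<Longrightarrow> le (u a) (u b)"
  by (metis P mup_le mup_min mup_sle po_trans)

lemma u_ge0: "le 0 (u v)" using sle_le mup_sle by blast

lemma u_ge: "le v (u v)" by (rule mup_le)

lemma u_sub: "le (u (a + b)) (u a + u b)"
  apply (rule mup_min)
   apply (rule po_addpos[OF Q]; rule mup_sle)
  apply (rule po_add_mono[OF P]; rule mup_le)
  done

lemma s_def': "ml_s le sle v = u v + u (- v)" by (simp add: ml_s_def)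

lemma s_pos: "sle 0 (ml_s le sle v)"
  unfolding s_def' by (rule po_addpos[OF Q]; rule mup_sle)

lemma s_s: "ml_s le sle (ml_s le sle v) = ml_s le sle v"
  using s_pos[of v] u_pos[of "ml_s le sle v"] u_neg[of "ml_s le sle v"] sle_le
  by (simp add: s_def'[of "ml_s le sle v"])

lemma norm_s: "norm (ml_s le sle v) = norm v"
  using nm unfolding mixed_lattice_norm_def
  by (metis P order_antisym po_refl s_s)

lemma norm_mono: "le 0 a \<Longrightarrow> le a b \<Longrightarrow> norm a \<le> norm b"
proof -
  assume a: "le 0 a" "le a b"
  then have b: "le 0 b" using po_trans[OF P] by blast
  have "ml_s le sle a = u a" using u_neg[OF a(1)] by (simp add: s_def')
  moreover have "ml_s le sle b = u b" using u_neg[OF b] by (simp add: s_def')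
  ultimately have "le (ml_s le sle a) (ml_s le sle b)" using u_mono[OF a(2)] by simp
  then show ?thesis using nm unfolding mixed_lattice_norm_def by blast
qed

lemma closed_P: "closed {v. le 0 v}"
proof -
  have "closure {v. le 0 v} \<subseteq> {v. le 0 v}"
  proof
    fix x assume x: "x \<in> closure {v. le 0 v}"
    have bd: "norm (u (- x)) \<le> norm (p - x)" if p: "le 0 p" for p
    proof -
      have "le (- x) (p - x)" using po_add[OF P p, of "-x"] by simp
      then have 1: "le (u (- x)) (u (p - x))" by (rule u_mono)
      have "le (u (p - x)) (ml_s le sle (p - x))"
        unfolding s_def' using po_add[OF P u_ge0[of "-(p-x)"], of "u (p - x)"] by (simp add: add.commute)
      then have "le (u (- x)) (ml_s le sle (p - x))" using 1 po_trans[OF P] by blast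
      then have "norm (u (- x)) \<le> norm (ml_s le sle (p - x))" using norm_mono u_ge0 by blast
      then show ?thesis using norm_s by simp
    qed
    have "norm (u (- x)) \<le> 0"
    proof (rule field_le_epsilon)
      fix e :: real assume "e > 0"
      then obtain p where "p \<in> {v. le 0 v}" "dist p x < e" using x unfolding closure_approachable by blast
      then show "norm (u (- x)) \<le> 0 + e" using bd[of p] by (simp add: dist_norm)
    qed
    then have "u (- x) = 0" by simp
    then have "le (- x) 0" using u_ge[of "-x"] by simp
    then show "x \<in> {v. le 0 v}" using po_neg[OF P] by fastforce
  qed
  then show ?thesis by (simp add: closure_subset_eq)
qed

lemma closed_Q: "closed {v. sle 0 v}"
proof -
  have "closure {v. sle 0 v} \<subseteq> {v. sle 0 v}"
  proof
    fix x assume x: "x \<in> closure {v. sle 0 v}"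
    have bd: "norm (u x - x) \<le> norm (x - p)" if p: "sle 0 p" for p
    proof -
      define v where "v = x - p"
      have "le (u x) (u p + u v)" using u_sub[of p v] by (simp add: v_def)
      then have "le (u x) (p + u v)" using u_pos[OF p] by simp
      then have 1: "le (u x - x) (p + u v - x)" using po_add[OF P, of _ _ "-x"] by simp
      have 2: "p + u v - x = u v + (- v)" by (simp add: v_def)
      have "le (u v + (- v)) (ml_s le sle v)"
        unfolding s_def' using po_add[OF P u_ge[of "-v"], of "u v"] by (simp add: add.commute)
      then have "le (u x - x) (ml_s le sle v)" using 1 2 po_trans[OF P] by metis
      moreover have "le 0 (u x - x)" using u_ge[of x] po_sub_iff[OF P] by blast
      ultimately have "norm (u x - x) \<le> norm (ml_s le sle v)" using norm_mono by blast
      then show ?thesis using norm_s by (simp add: v_def)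
    qed
    have "norm (u x - x) \<le> 0"
    proof (rule field_le_epsilon)
      fix e :: real assume "e > 0"
      then obtain p where "p \<in> {v. sle 0 v}" "dist p x < e" using x unfolding closure_approachable by blast
      then show "norm (u x - x) \<le> 0 + e" using bd[of p] norm_minus_commute[of x p] by (simp add: dist_norm del: norm_minus_commute)
    qed
    then have "u x = x" by simp
    then show "x \<in> {v. sle 0 v}" using mup_sle[of 0 x] by simp
  qed
  then show ?thesis by (simp add: closure_subset_eq)
qed

lemma mlow_trans: "mlow le sle (x + c) (y + c) = mlow le sle x y + c"
  apply (rule mlow_eq)
    apply (rule po_add[OF Q mlow_sle])
   apply (rule po_add[OF P mlow_le])
  subgoal for w'
    using mlow_max[of "w' - c" x y] po_add[OF Q, of w' "x + c" "-c"] po_add[OF P, of w' "y + c" "-c"]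
      po_add[OF P, of "w' - c" "mlow le sle x y" c]
    by simp
  done

lemma mlow_ub: "sle x z \<Longrightarrow> sle x a \<Longrightarrow> sle x (mlow le sle z a)"
proof -
  assume "sle x z" "sle x a"
  then have "sle 0 (z - x)" "sle 0 (a - x)" using po_sub_iff[OF Q] by blast+
  then have "sle 0 (mlow le sle (z + - x) (a + - x))" using sle_cl by simp
  then have "sle 0 (mlow le sle z a - x)" using mlow_trans[of z "-x" a] by simp
  then show ?thesis using po_sub_iff[OF Q] by blast
qed

end

context mls begin

lemma sup_exists:
  assumes fd: "\<exists>B. finite B \<and> span B = (UNIV :: 'a set)"
    and gen: "generating_cone sle"
  shows "\<exists>a. is_least_wrt sle {w. sle x w \<and> sle y w} a"
proof -
  define U where "U = {w. sle x w \<and> sle y w}"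
  obtain a1 b1 where ab1: "sle 0 a1" "sle 0 b1" "x = a1 - b1" using gen unfolding generating_cone_def by blast
  obtain a2 b2 where ab2: "sle 0 a2" "sle 0 b2" "y = a2 - b2" using gen unfolding generating_cone_def by blast
  define z0 where "z0 = a1 + a2"
  have "z0 - x = b1 + a2" "z0 - y = a1 + b2" using ab1(3) ab2(3) by (simp_all add: z0_def algebra_simps)
  then have "sle 0 (z0 - x)" "sle 0 (z0 - y)" using po_addpos[OF Q ab1(2) ab2(1)] po_addpos[OF Q ab1(1) ab2(2)] by simp_all
  then have z0U: "z0 \<in> U" unfolding U_def using po_sub_iff[OF Q] by blast
  have Ueq: "U = (\<lambda>w. w - x) -` {v. sle 0 v} \<inter> (\<lambda>w. w - y) -` {v. sle 0 v}"
    unfolding U_def using po_sub_iff[OF Q] by auto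
  have "closed ((\<lambda>w. w - c) -` {v. sle 0 v})" for c
    by (rule continuous_closed_vimage[OF closed_Q]) (intro continuous_intros)
  then have Ucl: "closed U" unfolding Ueq by (intro closed_Int) blast+
  have Lcl: "closed {w. le w c}" for c
  proof -
    have "{w. le w c} = (\<lambda>w. c - w) -` {v. le 0 v}" using po_sub_iff[OF P] by auto
    moreover have "closed ((\<lambda>w. c - w) -` {v. le 0 v})"
      by (rule continuous_closed_vimage[OF closed_P]) (intro continuous_intros)
    ultimately show ?thesis by simp
  qed
  define K where "K = U \<inter> {w. le w z0}"
  have Kb: "K \<subseteq> cball x (norm (z0 - x))"
  proof
    fix w assume "w \<in> K"
    then have w: "sle x w" "le w z0" unfolding K_def U_def by auto
    have "le 0 (w - x)" using sle_le[OF w(1)] po_sub_iff[OF P] by blast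
    moreover have "le (w - x) (z0 - x)" using po_add[OF P w(2), of "-x"] by simp
    ultimately have "norm (w - x) \<le> norm (z0 - x)" by (rule norm_mono)
    then show "w \<in> cball x (norm (z0 - x))" by (simp add: dist_norm norm_minus_commute)
  qed
  obtain B :: "'a set" where B: "finite B" "span B = UNIV" using fd by blast
  have Kbd: "bounded K" by (rule bounded_subset[OF bounded_cball Kb])
  have Kcl: "closed K" unfolding K_def by (rule closed_Int[OF Ucl Lcl])
  have Kc: "compact K"
    using fd_closed_compact[OF B(1)] B(2) Kbd Kcl by simp
  have fin: "\<exists>m\<in>U. le m z0 \<and> (\<forall>v\<in>G. le m v)" if "finite G" "G \<subseteq> U" for G
    using that
  proof (induction rule: finite_induct)
    case empty then show ?case using z0U po_refl[OF P] by blast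
  next
    case (insert v G)
    then obtain m where m: "m \<in> U" "le m z0" "\<forall>v\<in>G. le m v" by blast
    define m' where "m' = mlow le sle m v"
    have vU: "v \<in> U" using insert by auto
    have "m' \<in> U" using m(1) vU mlow_ub unfolding U_def m'_def by blast
    moreover have "le m' m" using sle_le[OF mlow_sle] unfolding m'_def by blast
    moreover have "le m' v" unfolding m'_def by (rule mlow_le)
    ultimately show ?case using m po_trans[OF P] by blast
  qed
  have "K \<inter> (\<Inter>v\<in>U. {w. le w v}) \<noteq> {}"
  proof (rule compact_imp_fip_image[OF Kc])
    show "closed {w. le w v}" for v by (rule Lcl)
    fix I' assume "finite I'" "I' \<subseteq> U"
    then obtain m where "m\<in>U" "le m z0" "\<forall>v\<in>I'. le m v" using fin by blast
    then show "K \<inter> (\<Inter>v\<in>I'. {w. le w v}) \<noteq> {}" unfolding K_def by blast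
  qed
  then obtain a where aU: "a \<in> U" and amin: "\<forall>v\<in>U. le a v" unfolding K_def by blast
  have "sle a z" if zU: "z \<in> U" for z
  proof -
    define m where "m = mlow le sle z a"
    have "m \<in> U" using zU aU mlow_ub unfolding U_def m_def by blast
    then have "le a m" using amin by blast
    moreover have "le m a" unfolding m_def by (rule mlow_le)
    ultimately have "m = a" using po_antisym[OF P] by blast
    then show ?thesis using mlow_sle[of z a] unfolding m_def by simp
  qed
  then have "is_least_wrt sle U a" using aU unfolding is_least_wrt_def by blast
  then show ?thesis unfolding U_def by blast
qed

lemma lattice:
  assumes fd: "\<exists>B. finite B \<and> span B = (UNIV :: 'a set)"
    and gen: "generating_cone sle"
  shows "is_lattice_order sle"
  unfolding is_lattice_order_def
proof (intro conjI allI)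
  fix x y show "\<exists>s. is_least_wrt sle {w. sle x w \<and> sle y w} s" using sup_exists[OF fd gen] by blast
next
  fix x y
  obtain s where s: "is_least_wrt sle {w. sle (-x) w \<and> sle (-y) w} s" using sup_exists[OF fd gen] by blast
  have "is_greatest_wrt sle {w. sle w x \<and> sle w y} (- s)"
    unfolding is_greatest_wrt_def
  proof (intro conjI ballI)
    show "- s \<in> {w. sle w x \<and> sle w y}"
      using s po_neg[OF Q, of "-x" s] po_neg[OF Q, of "-y" s] unfolding is_least_wrt_def by auto
    fix w assume "w \<in> {w. sle w x \<and> sle w y}"
    then have "sle (-x) (-w)" "sle (-y) (-w)" using po_neg[OF Q] by auto
    then have "sle s (-w)" using s unfolding is_least_wrt_def by blast
    then have "sle (- (- w)) (- s)" by (rule po_neg[OF Q])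
    then show "sle w (- s)" by simp
  qed
  then show "\<exists>i. is_greatest_wrt sle {w. sle w x \<and> sle w y} i" by blast
qed

end

theorem theorem4p11:
  fixes le sle :: "'a::real_normed_vector \<Rightarrow> 'a \<Rightarrow> bool"
  assumes "\<exists>B. finite B \<and> span B = (UNIV :: 'a set)"
    and "mixed_lattice_vs le sle"
    and "mixed_lattice_norm le sle norm"
    and "generating_cone sle"
  shows "is_lattice_order sle"
proof -
  interpret mls le sle using assms(2,3) by unfold_locales
  show ?thesis using lattice assms(1,4) by blast
qed

end
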